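(* Let $\mathcal{D}=\{z_1,\dots,z_n\}$, let $\mathcal{F}$ be a hypothesis class, $\ell:\mathcal{F}\times\mathcal{Z}\to\mathbb{R}_{\ge0}$ a loss with empirical risk $L(f;\mathcal{D})=\sum_{i=1}^n\ell(f;z_i)$, and let $\varepsilon\in(0,1)$. Let $\bar s_1,\dots,\bar s_n$ be any numbers with $\bar s_i\ge s_i$ for all $i$, where $s_i$ are the sensitivities. Let $\pi$ be a permutation of $\{1,\dots,n\}$ with $\bar s_{\pi(1)}\le\dots\le\bar s_{\pi(n)}$, let $\varepsilon'=\frac{2\varepsilon}{1+\varepsilon}$, let $m$ be the largest integer in $\{0,\dots,n\}$ with $\sum_{j=1}^m\bar s_{\pi(j)}\le\varepsilon'$, let $U=\{\pi(1),\dots,\pi(m)\}$, $S=\{1,\dots,n\}\setminus U$, $T_U=\sum_{i\in U}\bar s_i$, and $\alpha=\sqrt{\frac{1-\varepsilon^2}{1-T_U}}$. Then for every $f\in\mathcal{F}$, \[ (1-\varepsilon)L(f;\mathcal{D})\le \sum_{i\in S}\alpha\,\ell(f;z_i)\le (1+\varepsilon)L(f;\mathcal{D}), \] i.e. $(S,\{\alpha\}_{i\in S})$ is a $(1\pm\varepsilon)$-coreset.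
   Context: The sensitivity of point $i$ is $s_i \coloneqq \sup_{f\in\mathcal{F},\ L(f;\mathcal{D})>0} \frac{\ell(f;z_i)}{L(f;\mathcal{D})}$ (taken to be $0$ if no $f$ has $L(f;\mathcal{D})>0$). A weighted subset $(S,\{\alpha_i\}_{i\in S})$ is a $(1\pm\varepsilon)$-coreset if $(1-\varepsilon)L(f;\mathcal{D})\le\sum_{i\in S}\alpha_i\ell(f;z_i)\le(1+\varepsilon)L(f;\mathcal{D})$ for all $f\in\mathcal{F}$. *)

theory Defs
  imports Complex_Main
begin

definition emp_risk :: "('f \<Rightarrow> 'z \<Rightarrow> real) \<Rightarrow> (nat \<Rightarrow> 'z) \<Rightarrow> nat \<Rightarrow> 'f \<Rightarrow> real" where
  "emp_risk loss z n f = (\<Sum>i=1..n. loss f (z i))"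

definition sensitivity :: "'f set \<Rightarrow> ('f \<Rightarrow> 'z \<Rightarrow> real) \<Rightarrow> (nat \<Rightarrow> 'z) \<Rightarrow> nat \<Rightarrow> nat \<Rightarrow> real" where
  "sensitivity F loss z n i =
     (if {f \<in> F. emp_risk loss z n f > 0} = {} then 0
      else (SUP f \<in> {f \<in> F. emp_risk loss z n f > 0}. loss f (z i) / emp_risk loss z n f))"

end

theory Submission
  imports Defs
begin

theorem theorem1:
  fixes n :: nat and z :: "nat \<Rightarrow> 'z" and F :: "'f set" and loss :: "'f \<Rightarrow> 'z \<Rightarrow> real"
    and \<epsilon> :: real and sbar :: "nat \<Rightarrow> real" and \<pi> :: "nat \<Rightarrow> nat"
    and \<epsilon>' :: real and m :: nat and U :: "nat set" and S :: "nat set" and T\<^sub>U :: real and \<alpha> :: real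
  assumes loss_nonneg: "\<And>f x. loss f x \<ge> 0"
    and eps: "0 < \<epsilon>" "\<epsilon> < 1"
    and sbar_ge: "\<And>i. i \<in> {1..n} \<Longrightarrow> sbar i \<ge> sensitivity F loss z n i"
    and perm: "bij_betw \<pi> {1..n} {1..n}"
    and sorted: "\<And>i j. 1 \<le> i \<Longrightarrow> i \<le> j \<Longrightarrow> j \<le> n \<Longrightarrow> sbar (\<pi> i) \<le> sbar (\<pi> j)"
    and eps'_def: "\<epsilon>' = 2 * \<epsilon> / (1 + \<epsilon>)"
    and m_def: "m = Max {k. k \<le> n \<and> (\<Sum>j=1..k. sbar (\<pi> j)) \<le> \<epsilon>'}"
    and U_def: "U = \<pi> ` {1..m}"
    and S_def: "S = {1..n} - U"
    and TU_def: "T\<^sub>U = (\<Sum>i\<in>U. sbar i)"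
    and alpha_def: "\<alpha> = sqrt ((1 - \<epsilon>^2) / (1 - T\<^sub>U))"
  shows "\<forall>f\<in>F. (1 - \<epsilon>) * emp_risk loss z n f \<le> (\<Sum>i\<in>S. \<alpha> * loss f (z i))
                \<and> (\<Sum>i\<in>S. \<alpha> * loss f (z i)) \<le> (1 + \<epsilon>) * emp_risk loss z n f"
proof -
  let ?A = "{f \<in> F. emp_risk loss z n f > 0}"
  have le_L: "loss f (z i) \<le> emp_risk loss z n f" if "i \<in> {1..n}" for f i
    unfolding emp_risk_def
    using member_le_sum[of i "{1..n}" "\<lambda>i. loss f (z i)"] that loss_nonneg by auto
  have bdd: "bdd_above ((\<lambda>f. loss f (z i) / emp_risk loss z n f) ` ?A)" if "i \<in> {1..n}" for i
  proof (rule bdd_aboveI2[where M=1])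
    fix f assume "f \<in> ?A"
    then show "loss f (z i) / emp_risk loss z n f \<le> 1" using le_L[OF that, of f] by auto
  qed
  have sens_ge: "sensitivity F loss z n i \<ge> loss f (z i) / emp_risk loss z n f"
    if "i \<in> {1..n}" "f \<in> ?A" for i f
  proof -
    have "?A \<noteq> {}" using that by blast
    then have "sensitivity F loss z n i = (SUP f \<in> ?A. loss f (z i) / emp_risk loss z n f)"
      unfolding sensitivity_def by (simp only: if_False)
    then show ?thesis using cSUP_upper[OF that(2) bdd[OF that(1)]] by simp
  qed
  have sbar_nn: "sbar i \<ge> 0" if "i \<in> {1..n}" for i
  proof (cases "?A = {}")
    case True
    then show ?thesis using sbar_ge[OF that] unfolding sensitivity_def by simp
  next
    case False
    then obtain f where f: "f \<in> ?A" by blast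
    have "0 \<le> loss f (z i) / emp_risk loss z n f" using loss_nonneg f by auto
    also have "\<dots> \<le> sbar i" using sens_ge[OF that f] sbar_ge[OF that] by linarith
    finally show ?thesis .
  qed
  let ?K = "{k. k \<le> n \<and> (\<Sum>j=1..k. sbar (\<pi> j)) \<le> \<epsilon>'}"
  have "0 \<in> ?K" using eps eps'_def by simp
  moreover have "finite ?K" by (rule finite_subset[of _ "{..n}"]) auto
  ultimately have "m \<in> ?K" unfolding m_def by (intro Max_in) auto
  then have mn: "m \<le> n" and msum: "(\<Sum>j=1..m. sbar (\<pi> j)) \<le> \<epsilon>'" by auto
  have inj: "inj_on \<pi> {1..m}" using perm mn unfolding bij_betw_def
    by (metis atLeastatMost_subset_iff inj_on_subset order_refl)
  have TU: "T\<^sub>U = (\<Sum>j=1..m. sbar (\<pi> j))" unfolding TU_def U_def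
    using sum.reindex[OF inj, of sbar] by simp
  have Usub: "U \<subseteq> {1..n}" unfolding U_def using perm mn unfolding bij_betw_def by auto
  have TU_le: "T\<^sub>U \<le> \<epsilon>'" using TU msum by simp
  have TU_nn: "T\<^sub>U \<ge> 0" unfolding TU_def using Usub sbar_nn by (intro sum_nonneg) auto
  have key: "T\<^sub>U * (1 + \<epsilon>) \<le> 2 * \<epsilon>" using TU_le eps'_def eps
    by (simp add: pos_le_divide_eq)
  have T1: "T\<^sub>U < 1"
  proof (rule ccontr)
    assume "\<not> T\<^sub>U < 1"
    then have "1 * (1 + \<epsilon>) \<le> T\<^sub>U * (1 + \<epsilon>)" using eps by (intro mult_right_mono) auto
    then have "1 + \<epsilon> \<le> T\<^sub>U * (1 + \<epsilon>)" by simp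
    then show False using key eps by linarith
  qed
  have kk: "(1 + \<epsilon>) * (2 * \<epsilon> - T\<^sub>U * (1 + \<epsilon>)) \<ge> 0"
    "(1 - \<epsilon>) * (2 * \<epsilon> - T\<^sub>U * (1 + \<epsilon>)) \<ge> 0" using key eps by auto
  have "\<epsilon> * \<epsilon> \<le> \<epsilon> * 1" using eps by (intro mult_left_mono) auto
  then have "\<epsilon> * \<epsilon> < 1" using eps by linarith
  then have a_nn: "\<alpha> \<ge> 0" unfolding alpha_def using T1 eps by (simp add: power2_eq_square)
  have a_up: "\<alpha> \<le> 1 + \<epsilon>"
  proof -
    have "(1 + \<epsilon>)^2 * (1 - T\<^sub>U) - (1 - \<epsilon>^2) = (1 + \<epsilon>) * (2 * \<epsilon> - T\<^sub>U * (1 + \<epsilon>))"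
      by (simp add: algebra_simps power2_eq_square)
    then have "(1 - \<epsilon>^2) / (1 - T\<^sub>U) \<le> (1 + \<epsilon>)^2"
      using T1 kk by (simp add: divide_le_eq)
    from real_sqrt_le_mono[OF this] show ?thesis unfolding alpha_def using eps by simp
  qed
  have a_lo: "\<alpha> * (1 - T\<^sub>U) \<ge> 1 - \<epsilon>"
  proof -
    have "\<alpha>^2 = (1 - \<epsilon>^2) / (1 - T\<^sub>U)" unfolding alpha_def
      using \<open>\<epsilon> * \<epsilon> < 1\<close> T1 by (simp add: power2_eq_square[of \<epsilon>])
    then have "(\<alpha> * (1 - T\<^sub>U))^2 = (1 - \<epsilon>^2) * (1 - T\<^sub>U)"
      using T1 by (simp add: power_mult_distrib power2_eq_square[of "1 - T\<^sub>U"])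
    moreover have "(1 - \<epsilon>^2) * (1 - T\<^sub>U) - (1 - \<epsilon>)^2 = (1 - \<epsilon>) * (2 * \<epsilon> - T\<^sub>U * (1 + \<epsilon>))"
      by (simp add: algebra_simps power2_eq_square)
    then have "(1 - \<epsilon>)^2 \<le> (1 - \<epsilon>^2) * (1 - T\<^sub>U)"
      using kk by linarith
    ultimately have "(1 - \<epsilon>)^2 \<le> (\<alpha> * (1 - T\<^sub>U))^2" by simp
    moreover have "0 \<le> \<alpha> * (1 - T\<^sub>U)" using a_nn T1 by simp
    ultimately show ?thesis by (rule power2_le_imp_le)
  qed
  show ?thesis
  proof
    fix f assume fF: "f \<in> F"
    let ?L = "emp_risk loss z n f"
    have split: "(\<Sum>i\<in>S. loss f (z i)) + (\<Sum>i\<in>U. loss f (z i)) = ?L"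
      unfolding S_def emp_risk_def using Usub
      using sum.subset_diff[OF Usub, of "\<lambda>i. loss f (z i)"] by simp
    have Unn: "(\<Sum>i\<in>U. loss f (z i)) \<ge> 0" using loss_nonneg by (simp add: sum_nonneg)
    have Ule: "(\<Sum>i\<in>U. loss f (z i)) \<le> T\<^sub>U * ?L"
    proof (cases "?L > 0")
      case True
      have "(\<Sum>i\<in>U. loss f (z i)) \<le> (\<Sum>i\<in>U. sbar i * ?L)"
      proof (rule sum_mono)
        fix i assume "i \<in> U"
        then have i: "i \<in> {1..n}" using Usub by auto
        have "loss f (z i) / ?L \<le> sbar i" using sens_ge[OF i] fF True sbar_ge[OF i] by force
        then show "loss f (z i) \<le> sbar i * ?L" using True by (simp add: divide_le_eq)
      qed
      then show ?thesis unfolding TU_def by (simp add: sum_distrib_right)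
    next
      case False
      have "?L \<ge> 0" unfolding emp_risk_def using loss_nonneg by (simp add: sum_nonneg)
      then have "?L = 0" using False by simp
      then have "\<forall>i\<in>U. loss f (z i) \<le> 0" using Usub le_L[of _ f] by (metis subsetD)
      then show ?thesis using \<open>?L = 0\<close> by (simp add: sum_nonpos)
    qed
    have Snn: "(\<Sum>i\<in>S. loss f (z i)) \<ge> 0" using loss_nonneg by (simp add: sum_nonneg)
    have eq: "(\<Sum>i\<in>S. \<alpha> * loss f (z i)) = \<alpha> * (\<Sum>i\<in>S. loss f (z i))"
      by (simp add: sum_distrib_left)
    have Lnn: "?L \<ge> 0" unfolding emp_risk_def using loss_nonneg by (simp add: sum_nonneg)
    have lo: "(1 - \<epsilon>) * ?L \<le> \<alpha> * (\<Sum>i\<in>S. loss f (z i))"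
    proof -
      have "(1 - \<epsilon>) * ?L \<le> \<alpha> * (1 - T\<^sub>U) * ?L" using a_lo Lnn by (simp add: mult_right_mono)
      also have "\<dots> = \<alpha> * ((1 - T\<^sub>U) * ?L)" by simp
      also have "\<dots> \<le> \<alpha> * (\<Sum>i\<in>S. loss f (z i))"
        using split Ule a_nn by (intro mult_left_mono) (auto simp: algebra_simps)
      finally show ?thesis .
    qed
    have hi: "\<alpha> * (\<Sum>i\<in>S. loss f (z i)) \<le> (1 + \<epsilon>) * ?L"
    proof -
      have "\<alpha> * (\<Sum>i\<in>S. loss f (z i)) \<le> \<alpha> * ?L" using split Unn a_nn by (intro mult_left_mono) auto
      also have "\<dots> \<le> (1 + \<epsilon>) * ?L" using a_up Lnn by (simp add: mult_right_mono)
      finally show ?thesis .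
    qed
    show "(1 - \<epsilon>) * ?L \<le> (\<Sum>i\<in>S. \<alpha> * loss f (z i)) \<and> (\<Sum>i\<in>S. \<alpha> * loss f (z i)) \<le> (1 + \<epsilon>) * ?L"
      using lo hi eq by simp
  qed
qed

end
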